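(* There is a function $f$ (on an interval of $\mathbb{R}^{\mathbb{Z}_<}$) such that, in $\mathbb{R}^{\mathbb{Z}_<}$, $f$ satisfies $\mathrm{ED}$ but does not have the extreme value property $\mathrm{EVP}$.
   Context: $\mathbb{R}^{\mathbb{Z}_<}$ is the set of formal series $\sum_{i\ge -k}a_i\epsilon^i$ ($k\in\mathbb{N}\cup\{0\}$, $a_i\in\mathbb{R}$), with coefficientwise addition, Cauchy-product multiplication and lexicographic order; $|\cdot|$ is the associated absolute value. $f$ satisfies $\mathrm{ED}$ iff at every point $\mathbf{c}$ of its domain, for every positive $\iota_1\in\mathbb{R}^{\mathbb{Z}_<}$ there is a positive $\iota_2\in\mathbb{R}^{\mathbb{Z}_<}$ with $|f(\mathbf{x})-f(\mathbf{c})|<\iota_1$ whenever $|\mathbf{x}-\mathbf{c}|<\iota_2$. For $f:I\to J$ with $I$ an interval, $f$ has $\mathrm{EVP}$ iff for all $a\le b$ in $I$ there is $x\in[a,b]$ with $f(y)\le f(x)$ for all $y\in[a,b]$. *)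

theory Defs
  imports "HOL-Computational_Algebra.Formal_Laurent_Series"
begin

text \<open>The field R^{Z<}: formal Laurent series over the reals (finitely many negative powers),
  ordered lexicographically: x is positive iff its lowest nonzero coefficient is positive.\<close>

type_synonym rz = "real fls"

definition rz_pos :: "rz \<Rightarrow> bool" where
  "rz_pos x \<longleftrightarrow> x \<noteq> 0 \<and> fls_nth x (fls_subdegree x) > 0"

definition rz_less :: "rz \<Rightarrow> rz \<Rightarrow> bool" where
  "rz_less x y \<longleftrightarrow> rz_pos (y - x)"

definition rz_le :: "rz \<Rightarrow> rz \<Rightarrow> bool" where
  "rz_le x y \<longleftrightarrow> x = y \<or> rz_less x y"

definition rz_abs :: "rz \<Rightarrow> rz" where
  "rz_abs x = (if rz_pos x then x else - x)"

definition rz_interval :: "rz set \<Rightarrow> bool" where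
  "rz_interval I \<longleftrightarrow> (\<forall>a\<in>I. \<forall>b\<in>I. \<forall>c. rz_le a c \<and> rz_le c b \<longrightarrow> c \<in> I)"

definition rz_ED :: "rz set \<Rightarrow> (rz \<Rightarrow> rz) \<Rightarrow> bool" where
  "rz_ED I f \<longleftrightarrow> (\<forall>c\<in>I. \<forall>i1. rz_pos i1 \<longrightarrow> (\<exists>i2. rz_pos i2 \<and>
      (\<forall>x\<in>I. rz_less (rz_abs (x - c)) i2 \<longrightarrow> rz_less (rz_abs (f x - f c)) i1)))"

definition rz_EVP :: "rz set \<Rightarrow> (rz \<Rightarrow> rz) \<Rightarrow> bool" where
  "rz_EVP I f \<longleftrightarrow> (\<forall>a\<in>I. \<forall>b\<in>I. rz_le a b \<longrightarrow>
      (\<exists>x. rz_le a x \<and> rz_le x b \<and> (\<forall>y. rz_le a y \<and> rz_le y b \<longrightarrow> rz_le (f y) (f x))))"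

end

theory Submission
  imports Defs
begin

unbundle fps_syntax

lemma cdiff: "fls_const (r::real) - fls_const s = fls_const (r - s)"
  by (rule fls_eqI) simp

lemma const_inj: "fls_const (r::real) = fls_const s \<Longrightarrow> r = s"
  by (metis fls_const_nth)

lemma sub_const: "r \<noteq> 0 \<Longrightarrow> fls_subdegree (fls_const (r::real)) = 0"
  by (rule fls_subdegree_eqI) auto

lemma pos_const: "rz_pos (fls_const r) \<longleftrightarrow> r > 0"
  unfolding rz_pos_def
  by (cases "r = 0") (auto simp: sub_const)

lemma pos_X: "rz_pos fls_X"
  unfolding rz_pos_def by simp

lemma abs_props:
  assumes "d \<noteq> 0"
  shows "rz_abs d \<noteq> 0 \<and> fls_subdegree (rz_abs d) = fls_subdegree d
         \<and> rz_abs d $$ fls_subdegree d > 0"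
proof -
  have nz: "d $$ fls_subdegree d \<noteq> 0" using assms by simp
  show ?thesis
  proof (cases "rz_pos d")
    case True
    then show ?thesis unfolding rz_abs_def rz_pos_def by simp
  next
    case False
    then have "\<not> d $$ fls_subdegree d > 0" using assms unfolding rz_pos_def by simp
    then have "d $$ fls_subdegree d < 0" using nz by linarith
    moreover have "fls_subdegree (-d) = fls_subdegree d" by simp
    ultimately show ?thesis using False assms unfolding rz_abs_def by simp
  qed
qed

lemma small_nth0:
  assumes "rz_less (rz_abs d) fls_X"
  shows "d $$ 0 = 0"
proof (rule ccontr)
  assume h: "d $$ 0 \<noteq> 0"
  then have d0: "d \<noteq> 0" by auto
  define n where "n = fls_subdegree d"
  have n0: "n \<le> 0" using h fls_subdegree_leI n_def by blast
  define e where "e = rz_abs d"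
  have e: "e \<noteq> 0" "fls_subdegree e = n" "e $$ n > 0"
    using abs_props[OF d0] unfolding e_def n_def by auto
  have "(fls_X - e) $$ n = - (e $$ n)" using n0 by simp
  hence c: "(fls_X - e) $$ n < 0" using e by simp
  have "fls_subdegree (fls_X - e) = n"
  proof (rule fls_subdegree_eqI)
    show "(fls_X - e) $$ n \<noteq> 0" using c by simp
    fix k assume "k < n"
    then show "(fls_X - e) $$ k = 0" using n0 e(2) by simp
  qed
  then show False using assms c unfolding rz_less_def rz_pos_def e_def[symmetric] by simp
qed

definition g :: "real \<Rightarrow> real" where
  "g s = (if 0 \<le> s \<and> s < 1 then s else 0)"

definition ff :: "rz \<Rightarrow> rz" where
  "ff x = fls_const (g (x $$ 0))"

lemma g_lt1: "g s < 1" unfolding g_def by auto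

lemma le_const: "r \<le> s \<Longrightarrow> rz_le (fls_const r) (fls_const s)"
  unfolding rz_le_def rz_less_def
  by (cases "r = s") (auto simp: pos_const cdiff)

theorem mainTheorem6:
  shows "\<exists>(I::rz set) (f::rz \<Rightarrow> rz). rz_interval I \<and> rz_ED I f \<and> \<not> rz_EVP I f"
proof (intro exI conjI)
  show "rz_interval UNIV" unfolding rz_interval_def by simp
  show "rz_ED UNIV ff"
    unfolding rz_ED_def
  proof (intro ballI allI impI)
    fix c :: rz and i1 :: rz assume i1: "rz_pos i1"
    show "\<exists>i2. rz_pos i2 \<and> (\<forall>x\<in>UNIV. rz_less (rz_abs (x - c)) i2 \<longrightarrow> rz_less (rz_abs (ff x - ff c)) i1)"
    proof (intro exI conjI ballI impI)
      show "rz_pos fls_X" by (rule pos_X)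
      fix x assume "rz_less (rz_abs (x - c)) fls_X"
      hence "(x - c) $$ 0 = 0" by (rule small_nth0)
      hence "ff x = ff c" unfolding ff_def by simp
      then show "rz_less (rz_abs (ff x - ff c)) i1"
        using i1 unfolding rz_less_def rz_abs_def rz_pos_def by simp
    qed
  qed
  show "\<not> rz_EVP UNIV ff"
  proof
    assume "rz_EVP UNIV ff"
    moreover have "rz_le (fls_const 0) (fls_const 1)" by (rule le_const) simp
    ultimately obtain x where x: "\<forall>y. rz_le (fls_const 0) y \<and> rz_le y (fls_const 1) \<longrightarrow> rz_le (ff y) (ff x)"
      unfolding rz_EVP_def by blast
    define t where "t = (g (x $$ 0) + 1) / 2"
    have t: "g (x $$ 0) < t" "t < 1" "0 \<le> t"
      using g_lt1[of "x $$ 0"] unfolding t_def g_def by (auto split: if_splits)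
    have "rz_le (ff (fls_const t)) (ff x)"
      using x le_const[of 0 t] le_const[of t 1] t by simp
    moreover have "ff (fls_const t) = fls_const t" unfolding ff_def g_def using t by simp
    ultimately have "rz_le (fls_const t) (fls_const (g (x $$ 0)))" unfolding ff_def[of x] by simp
    then show False using t unfolding rz_le_def rz_less_def
      by (auto simp: pos_const cdiff dest: const_inj)
  qed
qed

end
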